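(* Let $X\subseteq[\omega]^\omega$ be closed such that $|x\cap y|=\omega$ for all $x,y\in X$. Then $X$ is $\sigma$-compact.
   Context: $[\omega]^\omega$ is the set of infinite subsets of $\omega$, topologized as a subspace of $\mathcal{P}(\omega)\cong 2^\omega$ (equivalently, by identifying each infinite set with its increasing enumeration, as a subspace of $\omega^\omega$). *)

theory Defs
  imports "HOL-Analysis.Analysis"
begin

text \<open>Cantor space P(omega) = 2^omega: subsets of nat identified with their
characteristic functions nat => bool, with the product of discrete topologies.\<close>
definition cantor_space :: "(nat \<Rightarrow> bool) topology" where
  "cantor_space = product_topology (\<lambda>_. discrete_topology UNIV) UNIV"

definition inf_subsets :: "(nat \<Rightarrow> bool) set" where
  "inf_subsets = {x. infinite {n. x n}}"

definition inf_subsets_space :: "(nat \<Rightarrow> bool) topology" where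
  "inf_subsets_space = subtopology cantor_space inf_subsets"

definition sigma_compact_in :: "'a topology \<Rightarrow> 'a set \<Rightarrow> bool" where
  "sigma_compact_in T S \<longleftrightarrow> (\<exists>K :: nat \<Rightarrow> 'a set. (\<forall>n. compactin T (K n)) \<and> S = (\<Union>n. K n))"

end

theory Submission
  imports Defs "HOL-Library.Countable_Set"
begin

lemma sc_empty: "sigma_compact_in T {}"
  unfolding sigma_compact_in_def by (rule exI[of _ "\<lambda>_. {}"]) auto

lemma sc_compact: "compactin T S \<Longrightarrow> sigma_compact_in T S"
  unfolding sigma_compact_in_def by (rule exI[of _ "\<lambda>_. S"]) auto

lemma sc_UN:
  assumes I: "countable I" and A: "\<And>i. i \<in> I \<Longrightarrow> sigma_compact_in T (A i)"
  shows "sigma_compact_in T (\<Union>i\<in>I. A i)"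
proof (cases "I = {}")
  case True then show ?thesis by (simp add: sc_empty)
next
  case False
  have "\<forall>i\<in>I. \<exists>K::nat\<Rightarrow>_. (\<forall>n. compactin T (K n)) \<and> A i = (\<Union>n. K n)"
  proof
    fix i assume "i \<in> I"
    from A[OF this] show "\<exists>K::nat\<Rightarrow>_. (\<forall>n. compactin T (K n)) \<and> A i = (\<Union>n. K n)"
      unfolding sigma_compact_in_def .
  qed
  then obtain KK :: "_ \<Rightarrow> nat \<Rightarrow> _" where KK0: "\<forall>i\<in>I. (\<forall>n. compactin T (KK i n)) \<and> A i = (\<Union>n. KK i n)"
    by (rule bchoice[THEN exE])
  define J where "J = I \<times> (UNIV :: nat set)"
  have J: "countable J" "J \<noteq> {}" using I False unfolding J_def by auto
  define f where "f = from_nat_into J"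
  have rf: "range f = J" using J unfolding f_def by (rule range_from_nat_into[rotated])
  have e1: "(\<Union>i\<in>I. A i) = (\<Union>i\<in>I. \<Union>n. KK i n)"
    by (rule SUP_cong) (use KK0 in auto)
  have e2: "(\<Union>i\<in>I. \<Union>n. KK i n) = (\<Union>p\<in>J. KK (fst p) (snd p))"
    unfolding J_def by force
  have e3: "(\<Union>p\<in>J. KK (fst p) (snd p)) = (\<Union>n. KK (fst (f n)) (snd (f n)))"
    unfolding rf[symmetric] by auto
  show ?thesis unfolding sigma_compact_in_def
  proof (intro exI[of _ "\<lambda>n. KK (fst (f n)) (snd (f n))"] conjI allI)
    fix n
    have "f n \<in> J" using rf by blast
    then have "fst (f n) \<in> I" unfolding J_def by auto
    then show "compactin T (KK (fst (f n)) (snd (f n)))" using KK0 by blast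
  next
    show "(\<Union>i\<in>I. A i) = (\<Union>n. KK (fst (f n)) (snd (f n)))"
      using trans[OF e1 trans[OF e2 e3]] .
  qed
qed

lemma sc_Un:
  assumes "sigma_compact_in T S" "sigma_compact_in T U"
  shows "sigma_compact_in T (S \<union> U)"
proof -
  have "S \<union> U = (\<Union>b\<in>(UNIV::bool set). if b then S else U)" by auto
  moreover have "sigma_compact_in T (\<Union>b\<in>(UNIV::bool set). if b then S else U)"
    by (rule sc_UN) (use assms in auto)
  ultimately show ?thesis by simp
qed

lemma topspace_cantor [simp]: "topspace cantor_space = UNIV"
  unfolding cantor_space_def by auto

lemma cyl_open: "openin cantor_space {w. \<forall>i<m. w i = z i}"
proof -
  have eq: "{w. \<forall>i<m. w i = z i} = PiE UNIV (\<lambda>i. if i < m then {z i} else UNIV)"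
    by (auto simp: PiE_def Pi_def)
  have "finite {i \<in> UNIV. (if i < m then {z i} else UNIV) \<noteq> topspace (discrete_topology (UNIV::bool set))}"
    by (rule finite_subset[of _ "{..<m}"]) auto
  then show ?thesis unfolding cantor_space_def eq
    by (subst openin_PiE_gen) auto
qed

lemma closed_crit:
  assumes "\<And>z. (\<forall>m. \<exists>y\<in>A. \<forall>i<m. y i = z i) \<Longrightarrow> z \<in> A"
  shows "closedin cantor_space A"
  unfolding closedin_def
proof (simp, subst openin_subopen, intro ballI)
  fix z assume "z \<in> UNIV - A"
  then have "\<not> (\<forall>m. \<exists>y\<in>A. \<forall>i<m. y i = z i)" using assms by (metis DiffD2)
  then obtain m where m: "\<forall>y\<in>A. \<not> (\<forall>i<m. y i = z i)" by auto
  show "\<exists>T. openin cantor_space T \<and> z \<in> T \<and> T \<subseteq> UNIV - A"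
    by (rule exI[of _ "{w. \<forall>i<m. w i = z i}"]) (use m cyl_open in auto)
qed

lemma compact_cantor: "compact_space cantor_space"
  unfolding cantor_space_def
  by (simp add: compact_space_product_topology compact_space_discrete_topology)

lemma compact_crit:
  assumes "closedin cantor_space S" "S \<subseteq> inf_subsets"
  shows "compactin inf_subsets_space S"
  unfolding inf_subsets_space_def compactin_subtopology
proof
  have "compactin cantor_space (topspace cantor_space)"
    using compact_cantor unfolding compact_space_def .
  then show "compactin cantor_space S"
    by (rule closed_compactin) (use assms in auto)
qed (use assms in auto)

lemma closed_limit:
  assumes C: "closedin cantor_space C" and A: "\<forall>m. \<exists>y\<in>C. \<forall>i<m. y i = z i"
  shows "z \<in> C"
proof (rule ccontr)
  assume zC: "z \<notin> C"
  have "openin cantor_space (UNIV - C)" using C unfolding closedin_def by simp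
  then have "\<forall>x\<in>UNIV - C. \<exists>U. finite {i \<in> UNIV. U i \<noteq> topspace (discrete_topology (UNIV::bool set))} \<and>
                 (\<forall>i \<in> UNIV. openin (discrete_topology UNIV) (U i)) \<and> x \<in> Pi\<^sub>E UNIV U \<and> Pi\<^sub>E UNIV U \<subseteq> UNIV - C"
    unfolding cantor_space_def openin_product_topology_alt .
  then obtain U where U: "finite {i \<in> UNIV. U i \<noteq> topspace (discrete_topology (UNIV::bool set))}"
    "z \<in> Pi\<^sub>E UNIV U" "Pi\<^sub>E UNIV U \<subseteq> UNIV - C" using zC by blast
  from U(1) have "finite {i. U i \<noteq> UNIV}" by simp
  then obtain m where m: "\<And>i. U i \<noteq> UNIV \<Longrightarrow> i < m" unfolding finite_nat_set_iff_bounded by blast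
  obtain y where y: "y \<in> C" "\<forall>i<m. y i = z i" using A by blast
  have "y \<in> Pi\<^sub>E UNIV U"
  proof -
    have "y i \<in> U i" for i
    proof (cases "U i = UNIV")
      case False
      then have "i < m" by (rule m)
      then show ?thesis using y U(2) by (auto simp: PiE_def Pi_def)
    qed simp
    then show ?thesis by (auto simp: PiE_def Pi_def)
  qed
  then show False using U(3) y(1) by blast
qed

definition Nd :: "(nat \<Rightarrow> bool) set \<Rightarrow> bool list \<Rightarrow> (nat \<Rightarrow> bool) set" where
  "Nd X l = {y\<in>X. \<forall>i<length l. y i = l!i}"

definition bad :: "(nat \<Rightarrow> bool) set \<Rightarrow> bool list \<Rightarrow> bool" where
  "bad X l \<longleftrightarrow> \<not> sigma_compact_in inf_subsets_space (Nd X l)"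

definition child :: "bool list \<Rightarrow> nat \<Rightarrow> bool list" where
  "child l k = l @ replicate (k - length l) False @ [True]"

definition spl :: "(nat \<Rightarrow> bool) set \<Rightarrow> bool list \<Rightarrow> bool" where
  "spl X l \<longleftrightarrow> infinite {k. length l \<le> k \<and> bad X (child l k)}"

definition pre :: "(nat \<Rightarrow> bool) \<Rightarrow> nat \<Rightarrow> bool list" where
  "pre y m = map y [0..<m]"

lemma length_child [simp]: "length l \<le> k \<Longrightarrow> length (child l k) = Suc k"
  unfolding child_def by simp

lemma child_nth: "length l \<le> k \<Longrightarrow> i \<le> k \<Longrightarrow> child l k ! i = (if i < length l then l!i else i = k)"
  unfolding child_def by (auto simp: nth_append nth_replicate)

lemma Nd_append: "Nd X (l @ t) \<subseteq> Nd X l"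
  unfolding Nd_def by (auto simp: nth_append)

lemma Nd_child: "Nd X (child l k) \<subseteq> Nd X l"
  unfolding child_def by (rule Nd_append)

lemma pre_in: "y \<in> X \<Longrightarrow> y \<in> Nd X (pre y m)"
  unfolding Nd_def pre_def by auto

lemma bad_nonempty: "bad X l \<Longrightarrow> Nd X l \<noteq> {}"
  unfolding bad_def using sc_empty by metis

lemma spl_nonempty: "spl X l \<Longrightarrow> Nd X l \<noteq> {}"
proof -
  assume "spl X l"
  then obtain k where "length l \<le> k" "bad X (child l k)" unfolding spl_def
    using not_finite_existsD by blast
  then show ?thesis using bad_nonempty Nd_child by blast
qed

lemma X_facts:
  assumes "closedin inf_subsets_space X"
  shows "X \<subseteq> inf_subsets" "\<exists>C. closedin cantor_space C \<and> X = C \<inter> inf_subsets"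
proof -
  show "X \<subseteq> inf_subsets" using closedin_subset[OF assms] unfolding inf_subsets_space_def by simp
  show "\<exists>C. closedin cantor_space C \<and> X = C \<inter> inf_subsets"
    using assms unfolding inf_subsets_space_def closedin_subtopology .
qed

lemma limit_in_X:
  assumes "closedin inf_subsets_space X" "infinite {n. z n}" "\<forall>m. \<exists>y\<in>X. \<forall>i<m. y i = z i"
  shows "z \<in> X"
proof -
  obtain C where C: "closedin cantor_space C" "X = C \<inter> inf_subsets" using X_facts[OF assms(1)] by blast
  have "\<forall>m. \<exists>y\<in>C. \<forall>i<m. y i = z i" using assms(3) C(2) by blast
  then have "z \<in> C" by (rule closed_limit[OF C(1)])
  then show ?thesis using C(2) assms(2) unfolding inf_subsets_def by blast
qed

lemma Nd_split:
  assumes X: "X \<subseteq> inf_subsets" and K: "length l \<le> K"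
  shows "Nd X (l @ replicate (K - length l) False) = (\<Union>k\<in>{K..}. Nd X (child l k))"
proof
  show "Nd X (l @ replicate (K - length l) False) \<subseteq> (\<Union>k\<in>{K..}. Nd X (child l k))"
  proof
    fix y assume y: "y \<in> Nd X (l @ replicate (K - length l) False)"
    then have yX: "y \<in> X" and ya: "\<forall>i<K. y i = (l @ replicate (K - length l) False) ! i"
      unfolding Nd_def using K by auto
    have "infinite {n. y n}" using yX X unfolding inf_subsets_def by blast
    then obtain k0 where "k0 \<ge> K" "y k0" unfolding infinite_nat_iff_unbounded_le by blast
    define k where "k = (LEAST k. K \<le> k \<and> y k)"
    have k: "K \<le> k" "y k" using LeastI[of "\<lambda>k. K \<le> k \<and> y k", OF conjI[OF \<open>k0 \<ge> K\<close> \<open>y k0\<close>]]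
      unfolding k_def by auto
    have kmin: "\<And>j. K \<le> j \<Longrightarrow> j < k \<Longrightarrow> \<not> y j"
      unfolding k_def using not_less_Least by blast
    have "y \<in> Nd X (child l k)"
      unfolding Nd_def
    proof (intro CollectI conjI allI impI)
      show "y \<in> X" by fact
      fix i assume "i < length (child l k)"
      then have ik: "i \<le> k" using K k by simp
      show "y i = child l k ! i"
      proof (cases "i < K")
        case True
        then show ?thesis using ya ik K k by (auto simp: child_nth nth_append nth_replicate)
      next
        case False
        then show ?thesis using kmin[of i] ik K k by (cases "i = k") (auto simp: child_nth)
      qed
    qed
    then show "y \<in> (\<Union>k\<in>{K..}. Nd X (child l k))" using k by blast
  qed
next
  show "(\<Union>k\<in>{K..}. Nd X (child l k)) \<subseteq> Nd X (l @ replicate (K - length l) False)"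
  proof
    fix y assume "y \<in> (\<Union>k\<in>{K..}. Nd X (child l k))"
    then obtain k where k: "K \<le> k" "y \<in> Nd X (child l k)" by blast
    then have yX: "y \<in> X" and ya: "\<forall>i<Suc k. y i = child l k ! i" unfolding Nd_def using K by auto
    show "y \<in> Nd X (l @ replicate (K - length l) False)"
      unfolding Nd_def
    proof (intro CollectI conjI allI impI)
      show "y \<in> X" by fact
      fix i assume "i < length (l @ replicate (K - length l) False)"
      then have "i < K" using K by simp
      then show "y i = (l @ replicate (K - length l) False) ! i"
        using ya[rule_format, of i] k K by (auto simp: child_nth nth_append nth_replicate)
    qed
  qed
qed

lemma lemA:
  assumes Xc: "closedin inf_subsets_space X" and b: "bad X l"
  shows "\<exists>t. spl X (l @ t)"
proof (rule ccontr)
  assume ns: "\<not> (\<exists>t. spl X (l @ t))"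
  have Xi: "X \<subseteq> inf_subsets" using X_facts(1)[OF Xc] .
  define S where "S = {y \<in> Nd X l. \<forall>m\<ge>length l. bad X (pre y m)}"
  define G where "G = {g. \<not> bad X g \<and> (\<exists>t. g = l @ t)}"
  have eq: "Nd X l = S \<union> (\<Union>g\<in>G. Nd X g)"
  proof
    show "Nd X l \<subseteq> S \<union> (\<Union>g\<in>G. Nd X g)"
    proof
      fix y assume y: "y \<in> Nd X l"
      show "y \<in> S \<union> (\<Union>g\<in>G. Nd X g)"
      proof (cases "y \<in> S")
        case False
        then obtain m where m: "m \<ge> length l" "\<not> bad X (pre y m)" using y unfolding S_def by blast
        have "pre y m = l @ drop (length l) (pre y m)"
        proof -
          have "take (length l) (pre y m) = l"
            using y m(1) unfolding Nd_def pre_def by (intro nth_equalityI) auto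
          then show ?thesis by (metis append_take_drop_id)
        qed
        then have "pre y m \<in> G" using m unfolding G_def by blast
        moreover have "y \<in> Nd X (pre y m)" by (rule pre_in) (use y in \<open>auto simp: Nd_def\<close>)
        ultimately show ?thesis by blast
      qed simp
    qed
  next
    show "S \<union> (\<Union>g\<in>G. Nd X g) \<subseteq> Nd X l"
      unfolding S_def G_def using Nd_append by blast
  qed
  have scG: "sigma_compact_in inf_subsets_space (\<Union>g\<in>G. Nd X g)"
    by (rule sc_UN) (auto simp: G_def bad_def)
  have Scl: "closedin cantor_space S"
  proof (rule closed_crit)
    fix z assume A: "\<forall>m. \<exists>y\<in>S. \<forall>i<m. y i = z i"
    have badz: "bad X (pre z m)" if "m \<ge> length l" for m
    proof -
      obtain y where y: "y \<in> S" "\<forall>i<m. y i = z i" using A by blast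
      have "pre y m = pre z m" using y(2) unfolding pre_def by simp
      then show ?thesis using y(1) that unfolding S_def by auto
    qed
    have zl: "\<forall>i<length l. z i = l!i"
    proof -
      obtain y where y: "y \<in> S" "\<forall>i<length l. y i = z i" using A by blast
      then show ?thesis unfolding S_def Nd_def by auto
    qed
    have zinf: "infinite {n. z n}"
    proof
      assume "finite {n. z n}"
      then obtain M where M: "\<forall>i. z i \<longrightarrow> i < M" unfolding finite_nat_set_iff_bounded by auto
      define m0 where "m0 = max M (length l)"
      define g where "g = pre z m0"
      have lg: "length g = m0" unfolding g_def pre_def by simp
      have "g = l @ drop (length l) g"
      proof -
        have "take (length l) g = l"
          using zl unfolding g_def pre_def m0_def by (intro nth_equalityI) auto
        then show ?thesis by (metis append_take_drop_id)
      qed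
      then have "\<not> spl X g" using ns by metis
      then have "finite {k. length g \<le> k \<and> bad X (child g k)}" unfolding spl_def by simp
      then obtain B where B: "\<forall>k. length g \<le> k \<and> bad X (child g k) \<longrightarrow> k \<le> B"
        unfolding finite_nat_set_iff_bounded_le by auto
      define K where "K = max m0 (Suc B)"
      have K: "length g \<le> K" "length l \<le> K" using lg unfolding K_def m0_def by auto
      have "pre z K = g @ replicate (K - length g) False"
      proof (rule nth_equalityI)
        show "length (pre z K) = length (g @ replicate (K - length g) False)"
          using K unfolding pre_def by simp
        fix i assume "i < length (pre z K)"
        then have iK: "i < K" unfolding pre_def by simp
        show "pre z K ! i = (g @ replicate (K - length g) False) ! i"
        proof (cases "i < m0")
          case True
          then show ?thesis using iK lg unfolding g_def pre_def by (simp add: nth_append)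
        next
          case False
          then have "\<not> z i" using M unfolding m0_def by auto
          moreover have "(g @ replicate (K - length g) False) ! i = False"
            using False iK lg by (simp add: nth_append nth_replicate)
          ultimately show ?thesis using iK unfolding pre_def by simp
        qed
      qed
      then have "Nd X (pre z K) = (\<Union>k\<in>{K..}. Nd X (child g k))" using Nd_split[OF Xi K(1)] by simp
      moreover have "sigma_compact_in inf_subsets_space (\<Union>k\<in>{K..}. Nd X (child g k))"
      proof (rule sc_UN)
        fix k assume "k \<in> {K..}"
        then have "\<not> bad X (child g k)" using B K lg unfolding K_def by auto
        then show "sigma_compact_in inf_subsets_space (Nd X (child g k))" unfolding bad_def by simp
      qed simp
      ultimately show False using badz[OF K(2)] unfolding bad_def by simp
    qed
    have "z \<in> X"
    proof (rule limit_in_X[OF Xc zinf], intro allI)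
      fix m obtain y where "y \<in> S" "\<forall>i<m. y i = z i" using A by blast
      then show "\<exists>y\<in>X. \<forall>i<m. y i = z i" unfolding S_def Nd_def by blast
    qed
    then show "z \<in> S" unfolding S_def Nd_def using zl badz by auto
  qed
  have "S \<subseteq> inf_subsets" using Xi unfolding S_def Nd_def by auto
  then have "sigma_compact_in inf_subsets_space S" using compact_crit Scl sc_compact by blast
  then have "sigma_compact_in inf_subsets_space (Nd X l)" using eq sc_Un scG by metis
  then show False using b unfolding bad_def by simp
qed

lemma ext_step:
  assumes Xc: "closedin inf_subsets_space X" and s: "spl X a"
  shows "\<exists>a'. spl X a' \<and> (\<exists>t. a' = a @ t) \<and> L < length a' \<and> (\<forall>i. length a \<le> i \<and> i < L \<longrightarrow> \<not> a'!i)
     \<and> (\<exists>i. length a \<le> i \<and> i < length a' \<and> a'!i)"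
proof -
  from s have "infinite {k. length a \<le> k \<and> bad X (child a k)}" unfolding spl_def .
  then obtain k where k: "max L (length a) \<le> k" "length a \<le> k" "bad X (child a k)"
    unfolding infinite_nat_iff_unbounded_le by blast
  obtain t where t: "spl X (child a k @ t)" using lemA[OF Xc k(3)] by blast
  define a' where "a' = child a k @ t"
  have len: "length a' \<ge> Suc k" using k unfolding a'_def by simp
  have nth: "a' ! i = (if i < length a then a!i else i = k)" if "i \<le> k" for i
    using child_nth[OF k(2) that] that k unfolding a'_def by (simp add: nth_append)
  show ?thesis
  proof (rule exI[of _ a'], intro conjI)
    show "spl X a'" using t unfolding a'_def .
    show "\<exists>t. a' = a @ t" unfolding a'_def child_def by simp
    show "L < length a'" using len k by simp
    show "\<forall>i. length a \<le> i \<and> i < L \<longrightarrow> \<not> a'!i" using nth k by auto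
    show "\<exists>i. length a \<le> i \<and> i < length a' \<and> a'!i" using nth[of k] len k by auto
  qed
qed

lemma chain_limit:
  assumes Xc: "closedin inf_subsets_space X"
    and ext: "\<And>n. \<exists>t. P (Suc n) = P n @ t"
    and len: "\<And>n. n \<le> length (P n)"
    and ne: "\<And>n. Nd X (P n) \<noteq> {}"
    and new: "\<And>n. \<exists>i. length (P n) \<le> i \<and> i < length (P (Suc n)) \<and> P (Suc n) ! i"
  shows "\<exists>y\<in>X. \<forall>n i. i < length (P n) \<longrightarrow> y i = P n ! i"
proof -
  have pre: "\<exists>t. P m = P n @ t" if "n \<le> m" for n m
    using that
  proof (induction rule: dec_induct)
    case base then show ?case by simp
  next
    case (step m)
    then obtain t where "P m = P n @ t" by blast
    moreover obtain t' where "P (Suc m) = P m @ t'" using ext by blast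
    ultimately show ?case by simp
  qed
  define y where "y i = P (Suc i) ! i" for i
  have yP: "y i = P n ! i" if "i < length (P n)" for n i
  proof (cases "n \<le> Suc i")
    case True
    obtain t where "P (Suc i) = P n @ t" using pre[OF True] by blast
    then show ?thesis using that unfolding y_def by (simp add: nth_append)
  next
    case False
    then have "Suc i \<le> n" by simp
    then obtain t where "P n = P (Suc i) @ t" using pre by blast
    moreover have "i < length (P (Suc i))" using len[of "Suc i"] by simp
    ultimately show ?thesis unfolding y_def by (simp add: nth_append)
  qed
  have "y \<in> X"
  proof (rule limit_in_X[OF Xc])
    show "infinite {n. y n}" unfolding infinite_nat_iff_unbounded_le
    proof
      fix m
      obtain i where i: "length (P m) \<le> i" "i < length (P (Suc m))" "P (Suc m) ! i" using new by blast
      then have "y i" using yP by simp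
      moreover have "m \<le> i" using len[of m] i by simp
      ultimately show "\<exists>n\<ge>m. n \<in> {n. y n}" by auto
    qed
    show "\<forall>m. \<exists>w\<in>X. \<forall>i<m. w i = y i"
    proof
      fix m
      obtain w where w: "w \<in> Nd X (P m)" using ne by blast
      have "\<forall>i<m. w i = y i"
      proof (intro allI impI)
        fix i assume "i < m"
        then have "i < length (P m)" using len[of m] by simp
        then show "w i = y i" using w yP unfolding Nd_def by auto
      qed
      then show "\<exists>w\<in>X. \<forall>i<m. w i = y i" using w unfolding Nd_def by auto
    qed
  qed
  then show ?thesis using yP by blast
qed

theorem lemma5p4:
  fixes X :: "(nat \<Rightarrow> bool) set"
  assumes "closedin inf_subsets_space X"
    and "\<forall>x\<in>X. \<forall>y\<in>X. infinite {n. x n \<and> y n}"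
  shows "sigma_compact_in inf_subsets_space X"
proof (rule ccontr)
  assume nsc: "\<not> sigma_compact_in inf_subsets_space X"
  have "Nd X [] = X" unfolding Nd_def by simp
  then have "bad X []" using nsc unfolding bad_def by simp
  then obtain a0 where a0: "spl X a0" using lemA[OF assms(1)] by auto
  define P where "P a L a' \<longleftrightarrow> spl X a' \<and> (\<exists>t. a' = a @ t) \<and> L < length a' \<and>
      (\<forall>i. length a \<le> i \<and> i < L \<longrightarrow> \<not> a'!i) \<and> (\<exists>i. length a \<le> i \<and> i < length a' \<and> a'!i)" for a L a'
  define E where "E a L = (SOME a'. P a L a')" for a L
  have EP: "P a L (E a L)" if "spl X a" for a L
  proof -
    have "\<exists>a'. P a L a'" using ext_step[OF assms(1) that, of L] unfolding P_def .
    then show ?thesis unfolding E_def by (rule someI_ex)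
  qed
  define seq where "seq = rec_nat (a0,a0) (\<lambda>_ p. (E (fst p) (length (snd p)), E (snd p) (length (E (fst p) (length (snd p))))))"
  define A where "A n = fst (seq n)" for n
  define B where "B n = snd (seq n)" for n
  have A0: "A 0 = a0" "B 0 = a0" by (simp_all add: A_def B_def seq_def)
  have AS: "A (Suc n) = E (A n) (length (B n))" for n by (simp add: A_def B_def seq_def)
  have BS: "B (Suc n) = E (B n) (length (A (Suc n)))" for n by (simp add: A_def B_def seq_def)
  define L0 where "L0 = length a0"
  have inv: "spl X (A n) \<and> spl X (B n) \<and> length (A n) \<le> length (B n) \<and> n \<le> length (A n) \<and>
     (\<forall>i. L0 \<le> i \<and> i < length (A n) \<and> i < length (B n) \<longrightarrow> \<not> (A n ! i \<and> B n ! i))" for n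
  proof (induction n)
    case 0 show ?case using a0 A0 L0_def by auto
  next
    case (Suc n)
    then have sA: "spl X (A n)" and sB: "spl X (B n)" and le: "length (A n) \<le> length (B n)" "n \<le> length (A n)"
      and dis: "\<forall>i. L0 \<le> i \<and> i < length (A n) \<and> i < length (B n) \<longrightarrow> \<not> (A n ! i \<and> B n ! i)" by auto
    have PA: "P (A n) (length (B n)) (A (Suc n))" using EP[OF sA] AS by simp
    then obtain t where t: "A (Suc n) = A n @ t" and sA': "spl X (A (Suc n))"
      and lA: "length (B n) < length (A (Suc n))"
      and zA: "\<forall>i. length (A n) \<le> i \<and> i < length (B n) \<longrightarrow> \<not> A (Suc n) ! i" unfolding P_def by blast
    have PB: "P (B n) (length (A (Suc n))) (B (Suc n))" using EP[OF sB] BS by simp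
    then obtain u where u: "B (Suc n) = B n @ u" and sB': "spl X (B (Suc n))"
      and lB: "length (A (Suc n)) < length (B (Suc n))"
      and zB: "\<forall>i. length (B n) \<le> i \<and> i < length (A (Suc n)) \<longrightarrow> \<not> B (Suc n) ! i" unfolding P_def by blast
    have "\<forall>i. L0 \<le> i \<and> i < length (A (Suc n)) \<and> i < length (B (Suc n)) \<longrightarrow> \<not> (A (Suc n) ! i \<and> B (Suc n) ! i)"
    proof (intro allI impI)
      fix i assume i: "L0 \<le> i \<and> i < length (A (Suc n)) \<and> i < length (B (Suc n))"
      show "\<not> (A (Suc n) ! i \<and> B (Suc n) ! i)"
      proof (cases "i < length (B n)")
        case True
        show ?thesis
        proof (cases "i < length (A n)")
          case True2: True
          then have "A (Suc n) ! i = A n ! i" "B (Suc n) ! i = B n ! i" using t u True by (simp_all add: nth_append)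
          then show ?thesis using dis i True True2 by auto
        next
          case False then show ?thesis using zA True by auto
        qed
      next
        case False then show ?thesis using zB i by auto
      qed
    qed
    then show ?case using sA' sB' lA lB le by auto
  qed
  have chA: "\<exists>y\<in>X. \<forall>n i. i < length (A n) \<longrightarrow> y i = A n ! i"
  proof (rule chain_limit[OF assms(1)])
    fix n
    have PA: "P (A n) (length (B n)) (A (Suc n))" using EP inv AS by simp
    then show "\<exists>t. A (Suc n) = A n @ t" "\<exists>i. length (A n) \<le> i \<and> i < length (A (Suc n)) \<and> A (Suc n) ! i"
      unfolding P_def by blast+
    show "n \<le> length (A n)" "Nd X (A n) \<noteq> {}" using inv spl_nonempty by blast+
  qed
  have chB: "\<exists>y\<in>X. \<forall>n i. i < length (B n) \<longrightarrow> y i = B n ! i"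
  proof (rule chain_limit[OF assms(1)])
    fix n
    have PB: "P (B n) (length (A (Suc n))) (B (Suc n))" using EP inv BS by simp
    then show "\<exists>t. B (Suc n) = B n @ t" "\<exists>i. length (B n) \<le> i \<and> i < length (B (Suc n)) \<and> B (Suc n) ! i"
      unfolding P_def by blast+
    show "n \<le> length (B n)" using inv le_trans by blast
    show "Nd X (B n) \<noteq> {}" using inv spl_nonempty by blast
  qed
  obtain y where y: "y \<in> X" "\<forall>n i. i < length (A n) \<longrightarrow> y i = A n ! i" using chA by blast
  obtain z where z: "z \<in> X" "\<forall>n i. i < length (B n) \<longrightarrow> z i = B n ! i" using chB by blast
  have "{n. y n \<and> z n} \<subseteq> {..<L0}"
  proof
    fix i assume i: "i \<in> {n. y n \<and> z n}"
    show "i \<in> {..<L0}"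
    proof (rule ccontr)
      assume "i \<notin> {..<L0}"
      then have iL: "L0 \<le> i" by simp
      have l1: "i < length (A (Suc i))" using inv[of "Suc i"] by simp
      have l2: "i < length (B (Suc i))" using inv[of "Suc i"] l1 by simp
      have "y i = A (Suc i) ! i" "z i = B (Suc i) ! i" using y(2) z(2) l1 l2 by blast+
      then show False using inv[of "Suc i"] iL l1 l2 i by auto
    qed
  qed
  then have "finite {n. y n \<and> z n}" using finite_subset by blast
  then show False using assms(2) y(1) z(1) by blast
qed

end
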